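(* Let $G=(V,E)$ be a finite planar embedded graph with $V=\{1,\dots,n\}$, let $\mathbf{p}$ be a packing of $G$, and let $V=V^+\sqcup V^-\sqcup V^=\sqcup V^0$ be a partition of the vertices. Then $\mathbf{p}$ is infinitesimally rigid (with respect to this partition) if and only if both of the following hold: (1) (Fixed radius condition) Every infinitesimal flex $\mathbf{p}'$ of $\mathbf{p}$ with $r_k'=0$ for all $k\in V^+\cup V^-\cup V^=$ is trivial; (2) (Stress existence condition) There exists an equilibrium stress $\omega$ on $(G,\mathbf{p})$ whose radial force sum $\omega_i=\sum_{j:(i,j)\in E}\omega_{ij}(r_i+r_j)$ is strictly positive for every $i\in V^-$, strictly negative for every $i\in V^+$, and equal to $0$ for every $i\in V^0$.
   Context: A packing of a planar embedded graph $G=(V,E)$, $V=\{1,\dots,n\}$, is a vector $\mathbf{p}=(x_1,y_1,r_1,\dots,x_n,y_n,r_n)\in\mathbb{R}^{3n}$ with all $r_i>0$ such that for every edge $(i,j)\in E$, $(r_i+r_j)^2=(x_i-x_j)^2+(y_i-y_j)^2$ (circle $i$ of center $\mathbf{p}_i=(x_i,y_i)$ and radius $r_i$ is externally tangent to circle $j$), and around each vertex the neighbors appear in the same counterclockwise order as in the given planar embedding. Disks not joined by an edge may overlap. The vertex set is partitioned into $V^+$ (radii allowed to increase or stay), $V^-$ (allowed to decrease or stay), $V^=$ (fixed radii), $V^0$ (free). An infinitesimal flex is a vector $\mathbf{p}'=(x_1',y_1',r_1',\dots,x_n',y_n',r_n')$ with $(\mathbf{p}_i-\mathbf{p}_j)\cdot(\mathbf{p}_i'-\mathbf{p}_j')=(r_i+r_j)(r_i'+r_j')$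 for all $(i,j)\in E$, where $\mathbf{p}_i'=(x_i',y_i')$. It is proper if $r_i'\ge 0$ for $i\in V^+$, $r_i'\le 0$ for $i\in V^-$, $r_i'=0$ for $i\in V^=$. It is trivial if it is the derivative at $t=0$ of a smooth family of congruent motions (rotations and translations of the plane applied to all centers, radii unchanged). The packing is infinitesimally rigid if every proper infinitesimal flex is trivial. A stress is a function $\omega:E\to\mathbb{R}$, $\omega_{ij}=\omega_{ji}$; it is an equilibrium stress if $\sum_{j:(i,j)\in E}\omega_{ij}(\mathbf{p}_i-\mathbf{p}_j)=0$ for every vertex $i$. *)

theory Defs
  imports "HOL-Analysis.Analysis"
begin

text \<open>Edges are a set of ordered pairs, required symmetric and
loop-free (an undirected simple graph); an ordered pair (i,j) in E is a dart.
A planar embedding is encoded combinatorially by a rotation system: rot i is the list of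
neighbours of i in counterclockwise order (up to cyclic shift).\<close>

definition verts :: "nat \<Rightarrow> nat set" where
  "verts n = {1..n}"

definition simple_graph :: "nat \<Rightarrow> (nat \<times> nat) set \<Rightarrow> bool" where
  "simple_graph n E \<longleftrightarrow> E \<subseteq> verts n \<times> verts n \<and> (\<forall>i j. (i,j) \<in> E \<longrightarrow> (j,i) \<in> E)
     \<and> (\<forall>i. (i,i) \<notin> E)"

definition nbrs :: "(nat \<times> nat) set \<Rightarrow> nat \<Rightarrow> nat set" where
  "nbrs E i = {j. (i,j) \<in> E}"

definition rotation_system :: "nat \<Rightarrow> (nat \<times> nat) set \<Rightarrow> (nat \<Rightarrow> nat list) \<Rightarrow> bool" where
  "rotation_system n E rot \<longleftrightarrow> (\<forall>i\<in>verts n. distinct (rot i) \<and> set (rot i) = nbrs E i)"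

definition cyc_next :: "nat list \<Rightarrow> nat \<Rightarrow> nat" where
  "cyc_next xs a = xs ! (((THE k. k < length xs \<and> xs ! k = a) + 1) mod length xs)"

text \<open>Face-tracing permutation on darts: (i,j) goes to (j, successor of i around j).\<close>
definition face_step :: "(nat \<Rightarrow> nat list) \<Rightarrow> nat \<times> nat \<Rightarrow> nat \<times> nat" where
  "face_step rot d = (snd d, cyc_next (rot (snd d)) (fst d))"

definition face_rel :: "(nat \<times> nat) set \<Rightarrow> (nat \<Rightarrow> nat list) \<Rightarrow> ((nat \<times> nat) \<times> (nat \<times> nat)) set" where
  "face_rel E rot = {(d, face_step rot d) | d. d \<in> E}"

definition num_faces :: "(nat \<times> nat) set \<Rightarrow> (nat \<Rightarrow> nat list) \<Rightarrow> nat" where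
  "num_faces E rot = card ((\<lambda>d. {e. (d,e) \<in> (face_rel E rot)\<^sup>*}) ` E)"

definition num_components :: "nat \<Rightarrow> (nat \<times> nat) set \<Rightarrow> nat" where
  "num_components n E = card ((\<lambda>v. {w. (v,w) \<in> E\<^sup>*}) ` verts n)"

definition num_isolated :: "nat \<Rightarrow> (nat \<times> nat) set \<Rightarrow> nat" where
  "num_isolated n E = card {v \<in> verts n. nbrs E v = {}}"

text \<open>Planarity of the rotation system: Euler's formula V - E + F = 2 on every component
(an isolated vertex counts as a component with one face).  Here card E counts darts,
i.e. twice the number of edges.\<close>
definition planar_embedded_graph :: "nat \<Rightarrow> (nat \<times> nat) set \<Rightarrow> (nat \<Rightarrow> nat list) \<Rightarrow> bool" where
  "planar_embedded_graph n E rot \<longleftrightarrow> simple_graph n E \<and> rotation_system n E rot \<and>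
     2 * int n - int (card E) + 2 * int (num_faces E rot) + 2 * int (num_isolated n E)
       = 4 * int (num_components n E)"

definition ccw_order :: "(nat \<Rightarrow> real) \<Rightarrow> (nat \<Rightarrow> real) \<Rightarrow> nat \<Rightarrow> nat list \<Rightarrow> bool" where
  "ccw_order x y i js \<longleftrightarrow> (\<exists>\<theta> :: nat \<Rightarrow> real.
      (\<forall>k < length js. let d = sqrt ((x (js!k) - x i)\<^sup>2 + (y (js!k) - y i)\<^sup>2) in
          d > 0 \<and> x (js!k) - x i = d * cos (\<theta> k) \<and> y (js!k) - y i = d * sin (\<theta> k)) \<and>
      (\<forall>k. Suc k < length js \<longrightarrow> \<theta> k < \<theta> (Suc k)) \<and>
      (length js > 0 \<longrightarrow> \<theta> (length js - 1) < \<theta> 0 + 2 * pi))"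

definition packing ::
  "nat \<Rightarrow> (nat \<times> nat) set \<Rightarrow> (nat \<Rightarrow> nat list) \<Rightarrow> (nat \<Rightarrow> real) \<Rightarrow> (nat \<Rightarrow> real) \<Rightarrow> (nat \<Rightarrow> real) \<Rightarrow> bool" where
  "packing n E rot x y r \<longleftrightarrow>
     (\<forall>i\<in>verts n. r i > 0) \<and>
     (\<forall>(i,j)\<in>E. (r i + r j)\<^sup>2 = (x i - x j)\<^sup>2 + (y i - y j)\<^sup>2) \<and>
     (\<forall>i\<in>verts n. ccw_order x y i (rot i))"

definition inf_flex ::
  "(nat \<times> nat) set \<Rightarrow> (nat \<Rightarrow> real) \<Rightarrow> (nat \<Rightarrow> real) \<Rightarrow> (nat \<Rightarrow> real) \<Rightarrow>
   (nat \<Rightarrow> real) \<Rightarrow> (nat \<Rightarrow> real) \<Rightarrow> (nat \<Rightarrow> real) \<Rightarrow> bool" where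
  "inf_flex E x y r x' y' r' \<longleftrightarrow>
     (\<forall>(i,j)\<in>E. (x i - x j) * (x' i - x' j) + (y i - y j) * (y' i - y' j) = (r i + r j) * (r' i + r' j))"

definition smooth_fun :: "(real \<Rightarrow> real) \<Rightarrow> bool" where
  "smooth_fun f \<longleftrightarrow> (\<forall>k t. ((deriv ^^ k) f) differentiable (at t))"

definition trivial_flex ::
  "nat \<Rightarrow> (nat \<Rightarrow> real) \<Rightarrow> (nat \<Rightarrow> real) \<Rightarrow> (nat \<Rightarrow> real) \<Rightarrow> (nat \<Rightarrow> real) \<Rightarrow> (nat \<Rightarrow> real) \<Rightarrow> bool" where
  "trivial_flex n x y x' y' r' \<longleftrightarrow>
     (\<exists>\<theta> a b :: real \<Rightarrow> real. smooth_fun \<theta> \<and> smooth_fun a \<and> smooth_fun b \<and>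
        \<theta> 0 = 0 \<and> a 0 = 0 \<and> b 0 = 0 \<and>
        (\<forall>i\<in>verts n.
           ((\<lambda>t. cos (\<theta> t) * x i - sin (\<theta> t) * y i + a t) has_real_derivative x' i) (at 0) \<and>
           ((\<lambda>t. sin (\<theta> t) * x i + cos (\<theta> t) * y i + b t) has_real_derivative y' i) (at 0) \<and>
           r' i = 0))"

definition vertex_partition :: "nat \<Rightarrow> nat set \<Rightarrow> nat set \<Rightarrow> nat set \<Rightarrow> nat set \<Rightarrow> bool" where
  "vertex_partition n Vp Vm Veq V0 \<longleftrightarrow> Vp \<union> Vm \<union> Veq \<union> V0 = verts n \<and>
     Vp \<inter> Vm = {} \<and> Vp \<inter> Veq = {} \<and> Vp \<inter> V0 = {} \<and> Vm \<inter> Veq = {} \<and> Vm \<inter> V0 = {} \<and>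
     Veq \<inter> V0 = {}"

definition proper_flex ::
  "nat set \<Rightarrow> nat set \<Rightarrow> nat set \<Rightarrow> (nat \<Rightarrow> real) \<Rightarrow> bool" where
  "proper_flex Vp Vm Veq r' \<longleftrightarrow> (\<forall>i\<in>Vp. r' i \<ge> 0) \<and> (\<forall>i\<in>Vm. r' i \<le> 0) \<and> (\<forall>i\<in>Veq. r' i = 0)"

definition inf_rigid ::
  "nat \<Rightarrow> (nat \<times> nat) set \<Rightarrow> nat set \<Rightarrow> nat set \<Rightarrow> nat set \<Rightarrow>
   (nat \<Rightarrow> real) \<Rightarrow> (nat \<Rightarrow> real) \<Rightarrow> (nat \<Rightarrow> real) \<Rightarrow> bool" where
  "inf_rigid n E Vp Vm Veq x y r \<longleftrightarrow>
     (\<forall>x' y' r'. inf_flex E x y r x' y' r' \<and> proper_flex Vp Vm Veq r' \<longrightarrow> trivial_flex n x y x' y' r')"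

definition stress :: "(nat \<times> nat) set \<Rightarrow> (nat \<Rightarrow> nat \<Rightarrow> real) \<Rightarrow> bool" where
  "stress E \<omega> \<longleftrightarrow> (\<forall>(i,j)\<in>E. \<omega> i j = \<omega> j i)"

definition equilibrium_stress ::
  "nat \<Rightarrow> (nat \<times> nat) set \<Rightarrow> (nat \<Rightarrow> real) \<Rightarrow> (nat \<Rightarrow> real) \<Rightarrow> (nat \<Rightarrow> nat \<Rightarrow> real) \<Rightarrow> bool" where
  "equilibrium_stress n E x y \<omega> \<longleftrightarrow> stress E \<omega> \<and>
     (\<forall>i\<in>verts n. (\<Sum>j\<in>nbrs E i. \<omega> i j * (x i - x j)) = 0 \<and>
                  (\<Sum>j\<in>nbrs E i. \<omega> i j * (y i - y j)) = 0)"

definition radial_force :: "(nat \<times> nat) set \<Rightarrow> (nat \<Rightarrow> real) \<Rightarrow> (nat \<Rightarrow> nat \<Rightarrow> real) \<Rightarrow> nat \<Rightarrow> real" where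
  "radial_force E r \<omega> i = (\<Sum>j\<in>nbrs E i. \<omega> i j * (r i + r j))"

end

theory Submission
  imports Defs
begin


definition linc :: "('x \<Rightarrow> real \<Rightarrow> 'x \<Rightarrow> 'x) \<Rightarrow> ('x \<Rightarrow> real) \<Rightarrow> bool" where
  "linc comb f \<longleftrightarrow> (\<forall>u t w. f (comb u t w) = f u + t * f w)"

lemma farkas_gen:
  assumes "finite J"
  shows "\<And>a b. (\<forall>j\<in>J. linc comb (a j)) \<Longrightarrow> linc comb b \<Longrightarrow>
     (\<forall>v. (\<forall>j\<in>J. a j v \<ge> 0) \<longrightarrow> b v \<ge> 0) \<Longrightarrow>
     \<exists>y. (\<forall>j\<in>J. y j \<ge> (0::real)) \<and> (\<forall>v. b v = (\<Sum>j\<in>J. y j * a j v))"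
  using assms
proof (induction J rule: finite_induct)
  case empty
  show ?case
  proof (rule ccontr)
    assume "\<not> ?case"
    then obtain v where v: "b v \<noteq> 0" by auto
    have "b (comb v (-2) v) = - b v" using empty(2) unfolding linc_def by auto
    moreover have "b v \<ge> 0" "b (comb v (-2) v) \<ge> 0" using empty(3) by auto
    ultimately show False using v by linarith
  qed
next
  case (insert j J)
  note lin = insert.prems(1) and linb = insert.prems(2) and H = insert.prems(3)
  show ?case
  proof (cases "\<forall>v. (\<forall>i\<in>J. a i v \<ge> 0) \<longrightarrow> b v \<ge> 0")
    case True
    from insert.IH[OF _ linb True] lin obtain y where y: "\<forall>i\<in>J. y i \<ge> 0"
      "\<forall>v. b v = (\<Sum>i\<in>J. y i * a i v)" by auto
    define y' where "y' = y(j := 0)"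
    have "\<forall>v. (\<Sum>i\<in>J. y' i * a i v) = (\<Sum>i\<in>J. y i * a i v)"
      using insert.hyps(2) unfolding y'_def by (intro allI sum.cong) auto
    then show ?thesis using y insert.hyps
      by (intro exI[of _ y']) (auto simp: y'_def)
  next
    case False
    then obtain xb where xb: "\<forall>i\<in>J. a i xb \<ge> 0" "b xb < 0" by (auto simp: not_le)
    have ajneg: "a j xb < 0"
    proof (rule ccontr)
      assume "\<not> a j xb < 0"
      then have "\<forall>i\<in>insert j J. a i xb \<ge> 0" using xb by auto
      with H xb show False by fastforce
    qed
    define a' where "a' i v = a i v - (a i xb / a j xb) * a j v" for i v
    define b' where "b' v = b v - (b xb / a j xb) * a j v" for v
    have lin': "\<forall>i\<in>J. linc comb (a' i)" using lin unfolding linc_def a'_def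
      by (auto simp: algebra_simps)
    have linb': "linc comb b'" using lin linb unfolding linc_def b'_def
      by (auto simp: algebra_simps)
    have H': "\<forall>v. (\<forall>i\<in>J. a' i v \<ge> 0) \<longrightarrow> b' v \<ge> 0"
    proof (intro allI impI)
      fix v assume A: "\<forall>i\<in>J. a' i v \<ge> 0"
      define z where "z = comb v (- (a j v / a j xb)) xb"
      have "\<forall>i\<in>J. a i z = a' i v" using lin unfolding z_def a'_def linc_def
        by (auto simp: field_simps)
      moreover have "a j z = 0" using lin ajneg unfolding z_def linc_def by auto
      ultimately have "\<forall>i\<in>insert j J. a i z \<ge> 0" using A by auto
      with H have "b z \<ge> 0" by blast
      moreover have "b z = b' v" using linb unfolding z_def b'_def linc_def
        by (auto simp: field_simps)
      ultimately show "b' v \<ge> 0" by simp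
    qed
    from insert.IH[OF lin' linb' H'] obtain y where y: "\<forall>i\<in>J. y i \<ge> 0"
      "\<forall>v. b' v = (\<Sum>i\<in>J. y i * a' i v)" by auto
    define c where "c = (b xb - (\<Sum>i\<in>J. y i * a i xb)) / a j xb"
    have "(\<Sum>i\<in>J. y i * a i xb) \<ge> 0" using y xb by (auto intro: sum_nonneg)
    then have c0: "c \<ge> 0" unfolding c_def using xb ajneg
      by (intro divide_nonpos_neg) auto
    define y' where "y' = y(j := c)"
    have "\<forall>v. b v = (\<Sum>i\<in>insert j J. y' i * a i v)"
    proof
      fix v
      have s1: "(\<Sum>i\<in>J. y' i * a i v) = (\<Sum>i\<in>J. y i * a i v)"
        using insert.hyps(2) unfolding y'_def by (intro sum.cong) auto
      have e1: "b' v = (\<Sum>i\<in>J. y i * a i v) - (\<Sum>i\<in>J. y i * (a i xb / a j xb * a j v))"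
        using y(2) unfolding a'_def by (simp add: right_diff_distrib sum_subtractf)
      have "(\<Sum>i\<in>J. y i * (a i xb / a j xb * a j v)) = (\<Sum>i\<in>J. y i * a i xb * (a j v / a j xb))"
        by (intro sum.cong) simp_all
      also have "\<dots> = (\<Sum>i\<in>J. y i * a i xb) * (a j v / a j xb)"
        by (simp add: sum_distrib_right sum_divide_distrib)
      finally have e2: "(\<Sum>i\<in>J. y i * (a i xb / a j xb * a j v)) = (\<Sum>i\<in>J. y i * a i xb) * (a j v / a j xb)" .
      have "b v = b' v + (b xb / a j xb) * a j v" unfolding b'_def by simp
      also have "\<dots> = (\<Sum>i\<in>J. y i * a i v) - (\<Sum>i\<in>J. y i * a i xb) * (a j v / a j xb) + (b xb / a j xb) * a j v"
        using e1 e2 by simp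
      also have "\<dots> = (\<Sum>i\<in>J. y i * a i v) + c * a j v"
        unfolding c_def using ajneg by (simp add: field_simps)
      finally have "b v = (\<Sum>i\<in>J. y i * a i v) + c * a j v" .
      then show "b v = (\<Sum>i\<in>insert j J. y' i * a i v)"
        using insert.hyps s1 by (simp add: y'_def)
    qed
    then show ?thesis using y c0 by (intro exI[of _ y']) (auto simp: y'_def)
  qed
qed



definition ef :: "(nat \<Rightarrow> real) \<Rightarrow> (nat \<Rightarrow> real) \<Rightarrow> (nat \<Rightarrow> real) \<Rightarrow> nat \<times> nat \<Rightarrow>
   (nat \<Rightarrow> real) \<times> (nat \<Rightarrow> real) \<times> (nat \<Rightarrow> real) \<Rightarrow> real" where
  "ef x y r d v = (x (fst d) - x (snd d)) * (fst v (fst d) - fst v (snd d))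
     + (y (fst d) - y (snd d)) * (fst (snd v) (fst d) - fst (snd v) (snd d))
     - (r (fst d) + r (snd d)) * (snd (snd v) (fst d) + snd (snd v) (snd d))"

lemma key:
  assumes finV: "finite V" and sub: "E \<subseteq> V \<times> V" and sym: "\<forall>i j. (i,j)\<in>E \<longrightarrow> (j,i)\<in>E"
    and w: "\<forall>(i,j)\<in>E. w i j = l (i,j) + l (j,i)"
  shows "(\<Sum>d\<in>E. l d * ef x y r d (x',y',r')) =
    (\<Sum>i\<in>V. x' i * (\<Sum>j\<in>nbrs E i. w i j * (x i - x j)) + y' i * (\<Sum>j\<in>nbrs E i. w i j * (y i - y j))
        - r' i * radial_force E r w i)"
proof -
  have finE: "finite E" using finV sub by (meson finite_SigmaI finite_subset)
  have finN: "finite (nbrs E i)" for i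
  proof -
    have "nbrs E i \<subseteq> snd ` E" by (force simp: nbrs_def)
    then show ?thesis using finE by (meson finite_imageI finite_subset)
  qed
  define Q where "Q d = (x (fst d) - x (snd d)) * x' (fst d) + (y (fst d) - y (snd d)) * y' (fst d)
      - (r (fst d) + r (snd d)) * r' (fst d)" for d
  define g where "g d = l (prod.swap d) * Q d" for d
  have sp: "l d * ef x y r d (x',y',r') = l d * Q d + g (prod.swap d)" for d
    unfolding g_def Q_def ef_def by (simp add: algebra_simps)
  have swE: "prod.swap ` E = E" using sym by force
  have inj: "inj_on prod.swap E" by (auto simp: inj_on_def)
  have "(\<Sum>d\<in>E. g (prod.swap d)) = (\<Sum>d\<in>prod.swap ` E. g d)"
    using sum.reindex[OF inj, of g] by (simp add: comp_def)
  also have "\<dots> = (\<Sum>d\<in>E. g d)" using swE by simp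
  finally have s: "(\<Sum>d\<in>E. g (prod.swap d)) = (\<Sum>d\<in>E. g d)" .
  have ES: "E = Sigma V (nbrs E)" using sub by (auto simp: nbrs_def)
  have "(\<Sum>d\<in>E. l d * ef x y r d (x',y',r')) = (\<Sum>d\<in>E. l d * Q d) + (\<Sum>d\<in>E. g d)"
    by (simp add: sp sum.distrib s)
  also have X: "\<dots> = (\<Sum>d\<in>E. w (fst d) (snd d) * Q d)"
    unfolding sum.distrib[symmetric] g_def using w
    by (intro sum.cong) (auto simp: algebra_simps)
  also have "(\<Sum>d\<in>E. w (fst d) (snd d) * Q d) = (\<Sum>d\<in>Sigma V (nbrs E). w (fst d) (snd d) * Q d)"
    by (simp only: ES[symmetric])
  also have "(\<Sum>d\<in>Sigma V (nbrs E). w (fst d) (snd d) * Q d) =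
      (\<Sum>i\<in>V. \<Sum>j\<in>nbrs E i. w i j * Q (i,j))"
    using finV finN
    by (subst sum.Sigma) (auto simp: case_prod_beta)
  also have "\<dots> = (\<Sum>i\<in>V. x' i * (\<Sum>j\<in>nbrs E i. w i j * (x i - x j)) + y' i * (\<Sum>j\<in>nbrs E i. w i j * (y i - y j))
        - r' i * radial_force E r w i)"
    unfolding radial_force_def Q_def
    by (intro sum.cong refl) (simp add: sum_distrib_left sum.distrib sum_subtractf algebra_simps)
  finally show ?thesis .
qed



lemma mult_if01: "(if c then (1::real) else 0) * a = (if c then a else 0)" by simp

theorem mainTheorem1:
  fixes n :: nat and E :: "(nat \<times> nat) set" and rot :: "nat \<Rightarrow> nat list"
    and x y r :: "nat \<Rightarrow> real" and Vp Vm Veq V0 :: "nat set"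
  assumes "planar_embedded_graph n E rot"
    and "packing n E rot x y r"
    and "vertex_partition n Vp Vm Veq V0"
  shows "inf_rigid n E Vp Vm Veq x y r \<longleftrightarrow>
    ((\<forall>x' y' r'. inf_flex E x y r x' y' r' \<and> (\<forall>k\<in>Vp \<union> Vm \<union> Veq. r' k = 0)
                 \<longrightarrow> trivial_flex n x y x' y' r') \<and>
     (\<exists>\<omega>. equilibrium_stress n E x y \<omega> \<and>
         (\<forall>i\<in>Vm. radial_force E r \<omega> i > 0) \<and>
         (\<forall>i\<in>Vp. radial_force E r \<omega> i < 0) \<and>
         (\<forall>i\<in>V0. radial_force E r \<omega> i = 0)))"
proof -
  have sg: "simple_graph n E" using assms(1) unfolding planar_embedded_graph_def by auto
  have sub: "E \<subseteq> verts n \<times> verts n" and sym: "\<forall>i j. (i,j)\<in>E \<longrightarrow> (j,i)\<in>E"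
    using sg unfolding simple_graph_def by auto
  have finV: "finite (verts n)" by (simp add: verts_def)
  have finE: "finite E" using finV sub by (meson finite_SigmaI finite_subset)
  have part: "Vp \<union> Vm \<union> Veq \<union> V0 = verts n" "Vp \<inter> Vm = {}" "Vp \<inter> Veq = {}" "Vp \<inter> V0 = {}"
     "Vm \<inter> Veq = {}" "Vm \<inter> V0 = {}" "Veq \<inter> V0 = {}"
    using assms(3) unfolding vertex_partition_def by auto
  have finP: "finite Vp" "finite Vm" "finite Veq"
    using part(1) finV by (metis finite_Un)+
  show ?thesis
  proof
    assume rig: "inf_rigid n E Vp Vm Veq x y r"
    have C1: "\<forall>x' y' r'. inf_flex E x y r x' y' r' \<and> (\<forall>k\<in>Vp \<union> Vm \<union> Veq. r' k = 0)
                 \<longrightarrow> trivial_flex n x y x' y' r'"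
      using rig unfolding inf_rigid_def proper_flex_def by auto
    define comb :: "((nat \<Rightarrow> real) \<times> (nat \<Rightarrow> real) \<times> (nat \<Rightarrow> real)) \<Rightarrow> real \<Rightarrow>
        ((nat \<Rightarrow> real) \<times> (nat \<Rightarrow> real) \<times> (nat \<Rightarrow> real)) \<Rightarrow> ((nat \<Rightarrow> real) \<times> (nat \<Rightarrow> real) \<times> (nat \<Rightarrow> real))"
      where "comb u t w = (\<lambda>i. fst u i + t * fst w i, \<lambda>i. fst (snd u) i + t * fst (snd w) i,
         \<lambda>i. snd (snd u) i + t * snd (snd w) i)" for u t w
    define A :: "((nat \<times> nat) \<times> bool) + (nat \<times> bool) \<Rightarrow> ((nat \<Rightarrow> real) \<times> (nat \<Rightarrow> real) \<times> (nat \<Rightarrow> real)) \<Rightarrow> real"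
      where "A p v = (case p of Inl q \<Rightarrow> (if snd q then 1 else -1) * ef x y r (fst q) v
                 | Inr q \<Rightarrow> (if snd q then 1 else -1) * snd (snd v) (fst q))" for p v
    define Bs where "Bs = Vp \<times> {True} \<union> Vm \<times> {False} \<union> Veq \<times> UNIV"
    define J :: "(((nat \<times> nat) \<times> bool) + (nat \<times> bool)) set" where "J = Inl ` (E \<times> UNIV) \<union> Inr ` Bs"
    define B :: "((nat \<Rightarrow> real) \<times> (nat \<Rightarrow> real) \<times> (nat \<Rightarrow> real)) \<Rightarrow> real"
      where "B v = (\<Sum>i\<in>Vm. snd (snd v) i) - (\<Sum>i\<in>Vp. snd (snd v) i)" for v
    have finBs: "finite Bs" unfolding Bs_def using finP by auto
    have finJ: "finite J" unfolding J_def using finE finBs by (auto intro!: finite_imageI finite_cartesian_product simp: UNIV_bool)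
    have linA: "\<forall>p\<in>J. linc comb (A p)"
      unfolding linc_def A_def comb_def ef_def
      by (auto split: sum.split simp: algebra_simps)
    have linB: "linc comb B"
      unfolding linc_def B_def comb_def
      by (auto simp: sum.distrib sum_distrib_left algebra_simps)
    have hyp: "\<forall>v. (\<forall>p\<in>J. A p v \<ge> 0) \<longrightarrow> B v \<ge> 0"
    proof (intro allI impI)
      fix v assume H: "\<forall>p\<in>J. A p v \<ge> 0"
      obtain x' y' r' where v: "v = (x',y',r')" by (cases v) auto
      have fl: "inf_flex E x y r x' y' r'"
        unfolding inf_flex_def
      proof (clarify)
        fix i j assume ij: "(i,j) \<in> E"
        have "A (Inl ((i,j),True)) v \<ge> 0" "A (Inl ((i,j),False)) v \<ge> 0"
          using H ij unfolding J_def by auto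
        then have "ef x y r (i,j) v = 0" unfolding A_def by auto
        then show "(x i - x j) * (x' i - x' j) + (y i - y j) * (y' i - y' j) = (r i + r j) * (r' i + r' j)"
          unfolding ef_def v by simp
      qed
      have pr: "proper_flex Vp Vm Veq r'"
        unfolding proper_flex_def
      proof (intro conjI ballI)
        fix i assume "i \<in> Vp"
        then have "A (Inr (i,True)) v \<ge> 0" using H unfolding J_def Bs_def by auto
        then show "r' i \<ge> 0" unfolding A_def v by simp
      next
        fix i assume "i \<in> Vm"
        then have "A (Inr (i,False)) v \<ge> 0" using H unfolding J_def Bs_def by auto
        then show "r' i \<le> 0" unfolding A_def v by simp
      next
        fix i assume "i \<in> Veq"
        then have "A (Inr (i,False)) v \<ge> 0" "A (Inr (i,True)) v \<ge> 0" using H unfolding J_def Bs_def by auto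
        then show "r' i = 0" unfolding A_def v by simp
      qed
      have "trivial_flex n x y x' y' r'" using rig fl pr unfolding inf_rigid_def by blast
      then have "\<forall>i\<in>verts n. r' i = 0" unfolding trivial_flex_def by blast
      then have "\<forall>i\<in>Vp \<union> Vm. r' i = 0" using part(1) by blast
      then show "B v \<ge> 0" unfolding B_def v by simp
    qed
    obtain yv where yv: "\<forall>p\<in>J. yv p \<ge> 0" "\<forall>v. B v = (\<Sum>p\<in>J. yv p * A p v)"
      using farkas_gen[OF finJ linA linB hyp] by blast
    define l where "l d = yv (Inl (d,False)) - yv (Inl (d,True))" for d
    define \<omega> where "\<omega> i j = l (i,j) + l (j,i)" for i j
    have split: "(\<Sum>p\<in>J. yv p * A p v) = - (\<Sum>d\<in>E. l d * ef x y r d v) + (\<Sum>q\<in>Bs. yv (Inr q) * A (Inr q) v)" for v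
    proof -
      have "(\<Sum>p\<in>J. yv p * A p v) = (\<Sum>p\<in>Inl ` (E \<times> UNIV). yv p * A p v) + (\<Sum>p\<in>Inr ` Bs. yv p * A p v)"
        unfolding J_def using finE finBs by (intro sum.union_disjoint) auto
      also have "(\<Sum>p\<in>Inr ` Bs. yv p * A p v) = (\<Sum>q\<in>Bs. yv (Inr q) * A (Inr q) v)"
        by (subst sum.reindex) (auto simp: inj_on_def)
      also have "(\<Sum>p\<in>Inl ` (E \<times> UNIV). yv p * A p v) = (\<Sum>q\<in>E \<times> UNIV. yv (Inl q) * A (Inl q) v)"
        by (subst sum.reindex) (auto simp: inj_on_def)
      also have "\<dots> = (\<Sum>d\<in>E. \<Sum>s\<in>UNIV. yv (Inl (d,s)) * A (Inl (d,s)) v)"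
        by (subst sum.cartesian_product) (simp add: case_prod_beta)
      also have "\<dots> = - (\<Sum>d\<in>E. l d * ef x y r d v)"
        unfolding sum_negf[symmetric]
        by (intro sum.cong refl) (simp add: UNIV_bool A_def l_def algebra_simps)
      finally show ?thesis .
    qed
    have EQ: "B (x',y',r') = - (\<Sum>i\<in>verts n. x' i * (\<Sum>j\<in>nbrs E i. \<omega> i j * (x i - x j)) + y' i * (\<Sum>j\<in>nbrs E i. \<omega> i j * (y i - y j))
        - r' i * radial_force E r \<omega> i) + (\<Sum>q\<in>Bs. yv (Inr q) * A (Inr q) (x',y',r'))" for x' y' r'
      using yv(2) split key[OF finV sub sym, of \<omega> l x y r x' y' r'] unfolding \<omega>_def by auto
    define \<delta> :: "nat \<Rightarrow> nat \<Rightarrow> real" where "\<delta> k i = (if i = k then 1 else 0)" for k i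
    define z :: "nat \<Rightarrow> real" where "z i = 0" for i
    have Inr0: "(\<Sum>q\<in>Bs. yv (Inr q) * A (Inr q) (x',y',z)) = 0" for x' y'
      by (intro sum.neutral) (auto simp: A_def z_def)
    have Bz: "B (x',y',z) = 0" for x' y' by (simp add: B_def z_def)
    have eqx: "(\<Sum>j\<in>nbrs E k. \<omega> k j * (x k - x j)) = 0" if k: "k \<in> verts n" for k
      using EQ[of "\<delta> k" z z] Inr0 Bz k finV by (simp add: \<delta>_def z_def mult_if01 sum.delta)
    have eqy: "(\<Sum>j\<in>nbrs E k. \<omega> k j * (y k - y j)) = 0" if k: "k \<in> verts n" for k
      using EQ[of z "\<delta> k" z] Inr0 Bz k finV by (simp add: \<delta>_def z_def mult_if01 sum.delta)
    have rfeq: "B (z,z,\<delta> k) = radial_force E r \<omega> k + (\<Sum>q\<in>Bs. yv (Inr q) * A (Inr q) (z,z,\<delta> k))"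
      if k: "k \<in> verts n" for k
      using EQ[of z z "\<delta> k"] k finV by (simp add: \<delta>_def z_def mult_if01 sum.delta sum_negf)
    have Bd: "B (z,z,\<delta> k) = (if k \<in> Vm then 1 else 0) - (if k \<in> Vp then 1 else 0)" for k
      using finP by (simp add: B_def \<delta>_def sum.delta)
    have yvI: "q \<in> Bs \<Longrightarrow> yv (Inr q) \<ge> 0" for q using yv(1) unfolding J_def by auto
    have C2: "equilibrium_stress n E x y \<omega> \<and>
         (\<forall>i\<in>Vm. radial_force E r \<omega> i > 0) \<and>
         (\<forall>i\<in>Vp. radial_force E r \<omega> i < 0) \<and>
         (\<forall>i\<in>V0. radial_force E r \<omega> i = 0)"
    proof (intro conjI ballI)
      show "equilibrium_stress n E x y \<omega>"
        unfolding equilibrium_stress_def stress_def using eqx eqy by (auto simp: \<omega>_def)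
    next
      fix k assume k: "k \<in> Vm"
      then have kv: "k \<in> verts n" "k \<notin> Vp" "k \<notin> Veq" using part by auto
      have "(\<Sum>q\<in>Bs. yv (Inr q) * A (Inr q) (z,z,\<delta> k)) \<le> 0"
      proof (intro sum_nonpos)
        fix q assume q: "q \<in> Bs"
        have "A (Inr q) (z,z,\<delta> k) \<le> 0" using q kv unfolding A_def \<delta>_def Bs_def by auto
        then show "yv (Inr q) * A (Inr q) (z,z,\<delta> k) \<le> 0" using yvI[OF q] by (simp add: mult_nonneg_nonpos)
      qed
      then show "radial_force E r \<omega> k > 0" using rfeq[OF kv(1)] Bd[of k] k kv by auto
    next
      fix k assume k: "k \<in> Vp"
      then have kv: "k \<in> verts n" "k \<notin> Vm" "k \<notin> Veq" using part by auto
      have "(\<Sum>q\<in>Bs. yv (Inr q) * A (Inr q) (z,z,\<delta> k)) \<ge> 0"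
      proof (intro sum_nonneg)
        fix q assume q: "q \<in> Bs"
        have "A (Inr q) (z,z,\<delta> k) \<ge> 0" using q kv unfolding A_def \<delta>_def Bs_def by auto
        then show "yv (Inr q) * A (Inr q) (z,z,\<delta> k) \<ge> 0" using yvI[OF q] by simp
      qed
      then show "radial_force E r \<omega> k < 0" using rfeq[OF kv(1)] Bd[of k] k kv by auto
    next
      fix k assume k: "k \<in> V0"
      then have kv: "k \<in> verts n" "k \<notin> Vm" "k \<notin> Veq" "k \<notin> Vp" using part by auto
      have "(\<Sum>q\<in>Bs. yv (Inr q) * A (Inr q) (z,z,\<delta> k)) = 0"
        using kv by (intro sum.neutral) (auto simp: A_def \<delta>_def Bs_def)
      then show "radial_force E r \<omega> k = 0" using rfeq[OF kv(1)] Bd[of k] k kv by auto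
    qed
    show "(\<forall>x' y' r'. inf_flex E x y r x' y' r' \<and> (\<forall>k\<in>Vp \<union> Vm \<union> Veq. r' k = 0)
                 \<longrightarrow> trivial_flex n x y x' y' r') \<and>
     (\<exists>\<omega>. equilibrium_stress n E x y \<omega> \<and>
         (\<forall>i\<in>Vm. radial_force E r \<omega> i > 0) \<and>
         (\<forall>i\<in>Vp. radial_force E r \<omega> i < 0) \<and>
         (\<forall>i\<in>V0. radial_force E r \<omega> i = 0))"
      using C1 C2 by blast
  next
    assume "(\<forall>x' y' r'. inf_flex E x y r x' y' r' \<and> (\<forall>k\<in>Vp \<union> Vm \<union> Veq. r' k = 0)
                 \<longrightarrow> trivial_flex n x y x' y' r') \<and>
     (\<exists>\<omega>. equilibrium_stress n E x y \<omega> \<and>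
         (\<forall>i\<in>Vm. radial_force E r \<omega> i > 0) \<and>
         (\<forall>i\<in>Vp. radial_force E r \<omega> i < 0) \<and>
         (\<forall>i\<in>V0. radial_force E r \<omega> i = 0))"
    then obtain \<omega> where C1: "\<forall>x' y' r'. inf_flex E x y r x' y' r' \<and> (\<forall>k\<in>Vp \<union> Vm \<union> Veq. r' k = 0)
                 \<longrightarrow> trivial_flex n x y x' y' r'"
      and eq: "equilibrium_stress n E x y \<omega>"
      and rm: "\<forall>i\<in>Vm. radial_force E r \<omega> i > 0"
      and rp: "\<forall>i\<in>Vp. radial_force E r \<omega> i < 0"
      and r0: "\<forall>i\<in>V0. radial_force E r \<omega> i = 0" by blast
    show "inf_rigid n E Vp Vm Veq x y r"
      unfolding inf_rigid_def
    proof (intro allI impI)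
      fix x' y' r' assume fp: "inf_flex E x y r x' y' r' \<and> proper_flex Vp Vm Veq r'"
      define l where "l d = \<omega> (fst d) (snd d) / 2" for d
      have w: "\<forall>(i,j)\<in>E. \<omega> i j = l (i,j) + l (j,i)"
        using eq unfolding equilibrium_stress_def stress_def l_def by auto
      have "(\<Sum>d\<in>E. l d * ef x y r d (x',y',r')) = 0"
      proof (intro sum.neutral ballI)
        fix d assume "d \<in> E"
        then have "ef x y r d (x',y',r') = 0" using fp unfolding inf_flex_def ef_def
          by (cases d) auto
        then show "l d * ef x y r d (x',y',r') = 0" by simp
      qed
      then have "(\<Sum>i\<in>verts n. x' i * (\<Sum>j\<in>nbrs E i. \<omega> i j * (x i - x j)) + y' i * (\<Sum>j\<in>nbrs E i. \<omega> i j * (y i - y j))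
        - r' i * radial_force E r \<omega> i) = 0"
        using key[OF finV sub sym w, of x y r x' y' r'] by simp
      also have "(\<Sum>i\<in>verts n. x' i * (\<Sum>j\<in>nbrs E i. \<omega> i j * (x i - x j)) + y' i * (\<Sum>j\<in>nbrs E i. \<omega> i j * (y i - y j))
        - r' i * radial_force E r \<omega> i) = (\<Sum>i\<in>verts n. - (r' i * radial_force E r \<omega> i))"
        using eq unfolding equilibrium_stress_def by (intro sum.cong) auto
      finally have s0: "(\<Sum>i\<in>verts n. - (r' i * radial_force E r \<omega> i)) = 0" .
      have nn: "\<forall>i\<in>verts n. - (r' i * radial_force E r \<omega> i) \<ge> 0"
      proof
        fix i assume "i \<in> verts n"
        then have "i \<in> Vp \<or> i \<in> Vm \<or> i \<in> Veq \<or> i \<in> V0" using part(1) by auto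
        then show "- (r' i * radial_force E r \<omega> i) \<ge> 0"
          using fp rm rp r0 unfolding proper_flex_def
          by (auto simp: mult_nonneg_nonpos mult_nonpos_nonneg less_imp_le)
      qed
      have all0: "\<forall>i\<in>verts n. r' i * radial_force E r \<omega> i = 0"
      proof -
        have "\<forall>i\<in>verts n. - (r' i * radial_force E r \<omega> i) = 0"
          using sum_nonneg_eq_0_iff[OF finV, of "\<lambda>i. - (r' i * radial_force E r \<omega> i)"] nn s0 by blast
        then show ?thesis by simp
      qed
      have "\<forall>k\<in>Vp \<union> Vm \<union> Veq. r' k = 0"
      proof
        fix k assume k: "k \<in> Vp \<union> Vm \<union> Veq"
        then have kv: "k \<in> verts n" using part(1) by auto
        show "r' k = 0" using k all0 kv rm rp fp unfolding proper_flex_def by force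
      qed
      then show "trivial_flex n x y x' y' r'" using C1 fp by blast
    qed
  qed
qed

end
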